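(* Let $K$ be as in the context and let $F=a_1x_1^4+\cdots+a_{11}x_{11}^4$ with all $a_i\in K\setminus\{0\}$. If $F$ is of type $(3,0,2,1)$, then $F$ has a nontrivial zero in $K^{11}$.
   Context: $K$ is one of $\mathbb{Q}_2(\sqrt2),\mathbb{Q}_2(\sqrt{10}),\mathbb{Q}_2(\sqrt{-2}),\mathbb{Q}_2(\sqrt{-10})$, with uniformizer $\pi$ and valuation $v_\pi$. The level of the variable $x_i$ is $v_\pi(a_i)$, considered modulo $4$. For nonnegative integers $s_0,s_1,s_2,s_3$, the form is said to be of type $(s_0,s_1,s_2,s_3)$ if there exists $j\in\mathbb{Z}/4$ such that for each $i\in\{0,1,2,3\}$ the number of variables whose level is congruent to $i+j$ modulo $4$ is at least $s_i$ (so types differing by a cyclic permutation of the entries are the same type). *)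

theory Defs
  imports "HOL-Computational_Algebra.Computational_Algebra"
begin

text \<open>Model of K = Q_2(sqrt d), d in {2,10,-2,-10}: the completion of the number field
Q(sqrt d) with respect to the (unique) prime above 2.  An element u + v sqrt d of Q(sqrt d)
is represented by the pair (u,v) of rationals; an element of K is represented by a Cauchy
sequence of such pairs, two sequences representing the same element iff their difference
is a null sequence.  Field operations on K are the pointwise operations on sequences.\<close>

definition qadd :: "rat \<times> rat \<Rightarrow> rat \<times> rat \<Rightarrow> rat \<times> rat" where
  "qadd x y = (fst x + fst y, snd x + snd y)"

definition qsub :: "rat \<times> rat \<Rightarrow> rat \<times> rat \<Rightarrow> rat \<times> rat" where
  "qsub x y = (fst x - fst y, snd x - snd y)"

definition qmul :: "rat \<Rightarrow> rat \<times> rat \<Rightarrow> rat \<times> rat \<Rightarrow> rat \<times> rat" where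
  "qmul d x y = (fst x * fst y + d * snd x * snd y, fst x * snd y + snd x * fst y)"

definition qpow4 :: "rat \<Rightarrow> rat \<times> rat \<Rightarrow> rat \<times> rat" where
  "qpow4 d x = qmul d (qmul d x x) (qmul d x x)"

definition v2 :: "rat \<Rightarrow> int" where
  "v2 q = (case quotient_of q of (n, m) \<Rightarrow>
              int (multiplicity (2::int) n) - int (multiplicity (2::int) m))"

text \<open>Normalized valuation v_pi on Q(sqrt d) (ramified at 2, v_pi(sqrt d) = 1):
  v_pi(u + v sqrt d) = v_2(norm) = v_2(u^2 - d v^2), for nonzero elements.\<close>
definition vpi :: "rat \<Rightarrow> rat \<times> rat \<Rightarrow> int" where
  "vpi d x = v2 ((fst x)^2 - d * (snd x)^2)"

definition pi_small :: "rat \<Rightarrow> int \<Rightarrow> rat \<times> rat \<Rightarrow> bool" where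
  "pi_small d N x \<longleftrightarrow> x = (0, 0) \<or> vpi d x \<ge> N"

definition K_cauchy :: "rat \<Rightarrow> (nat \<Rightarrow> rat \<times> rat) \<Rightarrow> bool" where
  "K_cauchy d s \<longleftrightarrow> (\<forall>N::int. \<exists>M. \<forall>m\<ge>M. \<forall>n\<ge>M. pi_small d N (qsub (s m) (s n)))"

text \<open>A Cauchy sequence represents 0 in K iff it is null.\<close>
definition K_null :: "rat \<Rightarrow> (nat \<Rightarrow> rat \<times> rat) \<Rightarrow> bool" where
  "K_null d s \<longleftrightarrow> (\<forall>N::int. \<exists>M. \<forall>n\<ge>M. pi_small d N (s n))"

text \<open>v_pi of the element of K represented by a non-null Cauchy sequence
  (the eventually constant value of v_pi along the sequence).\<close>
definition K_val :: "rat \<Rightarrow> (nat \<Rightarrow> rat \<times> rat) \<Rightarrow> int" where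
  "K_val d s = (THE k. \<exists>M. \<forall>n\<ge>M. vpi d (s n) = k)"

definition diag4 :: "rat \<Rightarrow> nat \<Rightarrow> (nat \<Rightarrow> nat \<Rightarrow> rat \<times> rat) \<Rightarrow> (nat \<Rightarrow> nat \<Rightarrow> rat \<times> rat)
                      \<Rightarrow> nat \<Rightarrow> rat \<times> rat" where
  "diag4 d r a x n = ((\<Sum>i<r. fst (qmul d (a i n) (qpow4 d (x i n)))),
                      (\<Sum>i<r. snd (qmul d (a i n) (qpow4 d (x i n)))))"

definition of_type :: "rat \<Rightarrow> nat \<Rightarrow> (nat \<Rightarrow> nat \<Rightarrow> rat \<times> rat) \<Rightarrow> nat \<Rightarrow> nat \<Rightarrow> nat \<Rightarrow> nat \<Rightarrow> bool" where
  "of_type d r a s0 s1 s2 s3 \<longleftrightarrow>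
     (\<exists>j::int.
        card {i. i < r \<and> K_val d (a i) mod 4 = j mod 4} \<ge> s0 \<and>
        card {i. i < r \<and> K_val d (a i) mod 4 = (j + 1) mod 4} \<ge> s1 \<and>
        card {i. i < r \<and> K_val d (a i) mod 4 = (j + 2) mod 4} \<ge> s2 \<and>
        card {i. i < r \<and> K_val d (a i) mod 4 = (j + 3) mod 4} \<ge> s3)"

end

theory Submission
  imports Defs "HOL-Library.Product_Plus"
begin

definition m2 :: "int \<Rightarrow> int" where "m2 x = int (multiplicity (2::int) x)"

lemma prime2: "prime_elem (2::int)" by simp

lemma m2_mult: "x \<noteq> 0 \<Longrightarrow> y \<noteq> 0 \<Longrightarrow> m2 (x*y) = m2 x + m2 y"
  unfolding m2_def using prime_elem_multiplicity_mult_distrib[OF prime2] by simp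

lemma m2_ge_iff: "x \<noteq> 0 \<Longrightarrow> (2::int)^k dvd x \<longleftrightarrow> int k \<le> m2 x"
  unfolding m2_def by (subst power_dvd_iff_le_multiplicity) auto

lemma m2_nonneg: "m2 x \<ge> 0" unfolding m2_def by simp

lemma v2_frac:
  assumes "n \<noteq> 0" "m \<noteq> 0"
  shows "v2 (of_int n / of_int m) = m2 n - m2 m"
proof -
  obtain n0 m0 where q: "quotient_of (of_int n / of_int m) = (n0, m0)" by (cases "quotient_of (of_int n / of_int m)")
  have m0: "m0 > 0" using quotient_of_denom_pos[OF q] .
  have eq: "(of_int n / of_int m :: rat) = of_int n0 / of_int m0" using quotient_of_div[OF q] .
  have "of_int n * of_int m0 = (of_int n0 * of_int m :: rat)" using eq assms m0
    by (simp add: field_simps)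
  hence ii: "n * m0 = n0 * m" by (metis of_int_eq_iff of_int_mult)
  have n0: "n0 \<noteq> 0" using ii assms m0 by auto
  have "m2 n + m2 m0 = m2 n0 + m2 m" using ii m2_mult assms m0 n0 by (metis less_irrefl)
  thus ?thesis unfolding v2_def q m2_def by simp
qed

lemma rat_rep: "\<exists>n m. n \<noteq> 0 \<and> m \<noteq> 0 \<and> q = of_int n / of_int m" if "q \<noteq> 0" for q :: rat
proof -
  obtain n m where qq: "quotient_of q = (n, m)" by (cases "quotient_of q")
  show ?thesis using quotient_of_div[OF qq] quotient_of_denom_pos[OF qq] that
    by (intro exI[of _ n] exI[of _ m]) auto
qed

definition ge2 :: "int \<Rightarrow> rat \<Rightarrow> bool" where "ge2 k q \<longleftrightarrow> q = 0 \<or> v2 q \<ge> k"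

lemma v2_mult: assumes "a \<noteq> 0" "b \<noteq> 0" shows "v2 (a*b) = v2 a + v2 b"
proof -
  obtain n m where a: "n \<noteq> 0" "m \<noteq> 0" "a = of_int n / of_int m" using rat_rep assms by blast
  obtain n' m' where b: "n' \<noteq> 0" "m' \<noteq> 0" "b = of_int n' / of_int m'" using rat_rep assms by blast
  have e: "a*b = of_int (n*n') / of_int (m*m')" using a b by simp
  have "v2 (a*b) = m2 (n*n') - m2 (m*m')" by (subst e, rule v2_frac) (use a b in auto)
  thus ?thesis using v2_frac a b m2_mult by simp
qed

lemma v2_neg: "v2 (-a) = v2 a"
proof (cases "a = 0")
  case False
  obtain n m where a: "n \<noteq> 0" "m \<noteq> 0" "a = of_int n / of_int m" using rat_rep False by blast
  have e: "-a = of_int (-n) / of_int m" using a by simp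
  have "m2 (-n) = m2 n" using m2_mult[of "-1" n] a by (simp add: m2_def)
  moreover have "v2 (-a) = m2 (-n) - m2 m" by (subst e, rule v2_frac) (use a in auto)
  ultimately show ?thesis using v2_frac a by simp
qed simp

lemma v2_int: "n \<noteq> 0 \<Longrightarrow> v2 (of_int n) = m2 n"
  using v2_frac[of n 1] by (simp add: m2_def)

lemma v2_inv: "v2 (inverse a) = - v2 a"
proof (cases "a = 0")
  case False
  obtain n m where a: "n \<noteq> 0" "m \<noteq> 0" "a = of_int n / of_int m" using rat_rep False by blast
  have "inverse a = of_int m / of_int n" using a by simp
  thus ?thesis using v2_frac a by simp
qed (simp add: v2_def)

lemma ge2_add: assumes "ge2 k a" "ge2 k b" shows "ge2 k (a+b)"
proof (cases "a = 0 \<or> b = 0 \<or> a + b = 0")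
  case True thus ?thesis using assms by (auto simp: ge2_def)
next
  case False
  obtain n m where a: "n \<noteq> 0" "m \<noteq> 0" "a = of_int n / of_int m" using rat_rep False by blast
  obtain n' m' where b: "n' \<noteq> 0" "m' \<noteq> 0" "b = of_int n' / of_int m'" using rat_rep False by blast
  have s: "a + b = of_int (n*m' + n'*m) / of_int (m*m')" using a b by (simp add: field_simps)
  have "of_int (n*m' + n'*m) / of_int (m*m') \<noteq> (0::rat)" using s False by (simp only:) simp
  hence nz: "n*m' + n'*m \<noteq> 0" by (metis div_0 of_int_0)
  have vs: "v2 (a+b) = m2 (n*m' + n'*m) - m2 (m*m')" by (subst s, rule v2_frac) (use a b nz in auto)
  have ka: "m2 n - m2 m \<ge> k" and kb: "m2 n' - m2 m' \<ge> k" using assms False a b v2_frac by (auto simp: ge2_def)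
  define E where "E = k + m2 m + m2 m'"
  have "m2 (n*m' + n'*m) \<ge> E"
  proof (cases "E \<le> 0")
    case True thus ?thesis using m2_nonneg[of "n*m' + n'*m"] by linarith
  next
    case F: False
    have e1: "m2 (n*m') \<ge> E" "m2 (n'*m) \<ge> E" using m2_mult a b ka kb E_def by auto
    have "(2::int)^nat E dvd n*m'" "(2::int)^nat E dvd n'*m"
      using e1 m2_ge_iff a b F by auto
    hence "(2::int)^nat E dvd n*m' + n'*m" by simp
    thus ?thesis using m2_ge_iff nz F by auto
  qed
  hence "v2 (a+b) \<ge> k" using vs a b m2_mult E_def by auto
  thus ?thesis by (simp add: ge2_def)
qed

lemma ge2_neg: "ge2 k (-a) = ge2 k a" by (simp add: ge2_def v2_neg)

lemma v2_same: assumes "a \<noteq> 0" "b \<noteq> 0" "v2 a = k" "v2 b = k" shows "ge2 (k+1) (a+b)"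
proof (cases "a + b = 0")
  case True thus ?thesis by (simp add: ge2_def)
next
  case False
  obtain n m where a: "n \<noteq> 0" "m \<noteq> 0" "a = of_int n / of_int m" using rat_rep assms by blast
  obtain n' m' where b: "n' \<noteq> 0" "m' \<noteq> 0" "b = of_int n' / of_int m'" using rat_rep assms by blast
  have s: "a + b = of_int (n*m' + n'*m) / of_int (m*m')" using a b by (simp add: field_simps)
  have "of_int (n*m' + n'*m) / of_int (m*m') \<noteq> (0::rat)" using s False by (simp only:) simp
  hence nz: "n*m' + n'*m \<noteq> 0" by (metis div_0 of_int_0)
  have vs: "v2 (a+b) = m2 (n*m' + n'*m) - m2 (m*m')" by (subst s, rule v2_frac) (use a b nz in auto)
  have ka: "m2 n - m2 m = k" and kb: "m2 n' - m2 m' = k" using assms a b v2_frac by auto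
  define E where "E = m2 (n*m')"
  have E2: "m2 (n'*m) = E" using m2_mult a b ka kb E_def by auto
  have E0: "E \<ge> 0" using m2_nonneg E_def by auto
  obtain o1 where o1: "n*m' = 2^multiplicity 2 (n*m') * o1" "\<not> 2 dvd o1"
    using multiplicity_decompose'[of "n*m'" "2::int"] a b by auto
  obtain o2 where o2: "n'*m = 2^multiplicity 2 (n'*m) * o2" "\<not> 2 dvd o2"
    using multiplicity_decompose'[of "n'*m" "2::int"] a b by auto
  have "multiplicity 2 (n'*m) = multiplicity 2 (n*m')" using E2 E_def by (simp add: m2_def)
  hence "n*m' + n'*m = 2^multiplicity 2 (n*m') * (o1 + o2)" using o1 o2 by (simp add: algebra_simps)
  moreover have "2 dvd o1 + o2" using o1(2) o2(2) by simp
  ultimately have "2^Suc (multiplicity 2 (n*m')) dvd n*m' + n'*m" by auto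
  hence "Suc (multiplicity 2 (n*m')) \<le> multiplicity 2 (n*m' + n'*m)"
    using power_dvd_iff_le_multiplicity[of "n*m'+n'*m" "2::int" "Suc (multiplicity 2 (n*m'))"] nz by simp
  hence "m2 (n*m' + n'*m) \<ge> E + 1" using E_def m2_def by simp
  hence "v2 (a+b) \<ge> k + 1" using vs a b m2_mult E_def ka by auto
  thus ?thesis by (simp add: ge2_def)
qed

lemma v2_strict: assumes "a \<noteq> 0" "b = 0 \<or> v2 a < v2 b" shows "a + b \<noteq> 0 \<and> v2 (a + b) = v2 a"
proof (cases "b = 0")
  case True thus ?thesis using assms by simp
next
  case False
  hence lt: "v2 a < v2 b" using assms by simp
  have nz: "a + b \<noteq> 0"
  proof
    assume "a + b = 0"
    hence "b = -a" by (simp add: eq_neg_iff_add_eq_0)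
    thus False using lt v2_neg[of a] by simp
  qed
  have ga: "ge2 (v2 a) a" by (simp add: ge2_def)
  have gb: "ge2 (v2 a) b" using lt by (simp add: ge2_def)
  have g1: "ge2 (v2 a) (a+b)" using ge2_add[OF ga gb] .
  have "\<not> v2 (a+b) > v2 a"
  proof
    assume h: "v2 (a+b) > v2 a"
    have h1: "ge2 (v2 a + 1) (a+b)" using h by (simp add: ge2_def)
    have h2: "ge2 (v2 a + 1) (-b)" using lt by (simp add: ge2_def v2_neg)
    have "ge2 (v2 a + 1) ((a+b) + (-b))" using ge2_add[OF h1 h2] .
    thus False using assms(1) by (simp add: ge2_def)
  qed
  thus ?thesis using g1 nz by (auto simp: ge2_def)
qed


lemma pair0[simp]: "(0::rat\<times>rat) = (0,0)" by (simp add: zero_prod_def)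

lemma m2_odd: "\<not> 2 dvd k \<Longrightarrow> m2 k = 0" unfolding m2_def by (simp add: not_dvd_imp_multiplicity_0)
lemma m2_2k: "k \<noteq> 0 \<Longrightarrow> m2 (2*k) = 1 + m2 k" using m2_mult[of 2 k]
  by (simp add: m2_def multiplicity_self)

lemma v2_2: "v2 2 = 1" using v2_int[of 2] m2_2k[of 1] m2_odd[of 1] by simp
lemma v2_10: "v2 10 = 1" using v2_int[of 10] m2_2k[of 5] m2_odd[of 5] by simp
lemma v2_m2: "v2 (-2) = 1" using v2_2 v2_neg[of 2] by simp
lemma v2_m10: "v2 (-10) = 1" using v2_10 v2_neg[of 10] by simp

lemma v2_sq: "q \<noteq> 0 \<Longrightarrow> v2 (q^2) = 2 * v2 q" by (simp add: power2_eq_square v2_mult)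

lemma ge2_mono: "ge2 k a \<Longrightarrow> j \<le> k \<Longrightarrow> ge2 j a" by (auto simp: ge2_def)

lemma exact2: "ge2 k a \<Longrightarrow> \<not> ge2 (k+1) a \<Longrightarrow> ge2 k b \<Longrightarrow> \<not> ge2 (k+1) b \<Longrightarrow> ge2 (k+1) (a+b)"
  using v2_same[of a b k] by (auto simp: ge2_def)

locale QD =
  fixes d :: rat
  assumes dS: "d \<in> {2, 10, -2, -10}"
begin

lemma v2d: "v2 d = 1" using dS v2_2 v2_10 v2_m2 v2_m10 by auto
lemma d0: "d \<noteq> 0" using dS by auto

abbreviation ps where "ps N x \<equiv> pi_small d N x"
abbreviation mul (infixl "\<cdot>" 70) where "x \<cdot> y \<equiv> qmul d x y"

lemma norm_nz: assumes "(u,v) \<noteq> (0::rat\<times>rat)" shows "u^2 - d*v^2 \<noteq> 0"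
proof (cases "u = 0")
  case True thus ?thesis using assms d0 by auto
next
  case u: False
  show ?thesis
  proof (cases "v = 0")
    case True thus ?thesis using u by auto
  next
    case False
    have "v2 (u^2) = 2 * v2 u" using v2_sq u .
    moreover have "v2 (d*v^2) = 1 + 2 * v2 v" using v2_mult[of d "v^2"] v2_sq[of v] False d0 v2d by simp
    ultimately have "v2 (u^2) \<noteq> v2 (d*v^2)" by presburger
    thus ?thesis by auto
  qed
qed

lemma vpi_formula:
  assumes "(u,v) \<noteq> (0::rat\<times>rat)"
  shows "(vpi d (u,v) \<ge> N) \<longleftrightarrow> ge2 ((N+1) div 2) u \<and> ge2 (N div 2) v"
proof -
  have vp: "vpi d (u,v) = v2 (u^2 + (- (d*v^2)))" by (simp add: vpi_def)
  show ?thesis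
  proof (cases "u = 0")
    case True
    hence v: "v \<noteq> 0" using assms by auto
    have "vpi d (u,v) = 1 + 2 * v2 v" using vp True v2_neg v2_mult[of d "v^2"] v2_sq[of v] v d0 v2d by simp
    thus ?thesis using True v by (auto simp: ge2_def; presburger)
  next
    case u: False
    show ?thesis
    proof (cases "v = 0")
      case True
      have "vpi d (u,v) = 2 * v2 u" using vp True v2_sq[OF u] by simp
      thus ?thesis using True u by (auto simp: ge2_def; presburger)
    next
      case v: False
      have a: "v2 (u^2) = 2 * v2 u" using v2_sq u .
      have b: "v2 (-(d*v^2)) = 1 + 2 * v2 v" using v2_neg v2_mult[of d "v^2"] v2_sq[of v] v d0 v2d by simp
      have "vpi d (u,v) = min (2 * v2 u) (1 + 2 * v2 v)"
      proof (cases "2 * v2 u < 1 + 2 * v2 v")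
        case True
        thus ?thesis using v2_strict[of "u^2" "-(d*v^2)"] a b u vp by simp
      next
        case False
        hence "1 + 2 * v2 v < 2 * v2 u" by presburger
        thus ?thesis using v2_strict[of "-(d*v^2)" "u^2"] a b v d0 vp by (simp add: add.commute)
      qed
      thus ?thesis using u v by (auto simp: ge2_def; presburger)
    qed
  qed
qed

lemma ps_iff: "ps N (u,v) \<longleftrightarrow> ge2 ((N+1) div 2) u \<and> ge2 (N div 2) v"
  by (cases "(u,v) = (0::rat\<times>rat)") (auto simp: pi_small_def vpi_formula ge2_def)

lemma ps_iff': "ps N x \<longleftrightarrow> ge2 ((N+1) div 2) (fst x) \<and> ge2 (N div 2) (snd x)"
  using ps_iff[of N "fst x" "snd x"] by simp

lemma ps_add: "ps N x \<Longrightarrow> ps N y \<Longrightarrow> ps N (x + y)"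
  by (simp add: ps_iff' ge2_add)
lemma ps_neg: "ps N (-x) = ps N x"
  by (simp add: ps_iff' ge2_neg)
lemma ps_diff: "ps N x \<Longrightarrow> ps N y \<Longrightarrow> ps N (x - y)"
  using ps_add[of N x "-y"] ps_neg[of N y] by simp
lemma ps_mono: "ps N x \<Longrightarrow> M \<le> N \<Longrightarrow> ps M x"
  by (auto simp: pi_small_def)
lemma ps_zero[simp]: "ps N (0,0)" by (simp add: pi_small_def)

lemma ps_exists: "\<exists>N. ps N x" by (auto simp: pi_small_def)

definition ex :: "int \<Rightarrow> rat \<times> rat \<Rightarrow> bool" where "ex k x \<longleftrightarrow> ps k x \<and> \<not> ps (k+1) x"

lemma ex_iff: "ex k x \<longleftrightarrow> x \<noteq> 0 \<and> vpi d x = k"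
  by (auto simp: ex_def pi_small_def zero_prod_def)

lemma F2: assumes "ex k x" "ex k y" shows "ps (k+1) (x+y)"
proof -
  obtain u v where x: "x = (u,v)" by (cases x)
  obtain u' v' where y: "y = (u',v')" by (cases y)
  have hx: "ge2 ((k+1) div 2) u" "ge2 (k div 2) v" "\<not> (ge2 ((k+2) div 2) u \<and> ge2 ((k+1) div 2) v)"
    using assms(1) x by (auto simp: ex_def ps_iff add.assoc)
  have hy: "ge2 ((k+1) div 2) u'" "ge2 (k div 2) v'" "\<not> (ge2 ((k+2) div 2) u' \<and> ge2 ((k+1) div 2) v')"
    using assms(2) y by (auto simp: ex_def ps_iff add.assoc)
  show ?thesis
  proof (cases "even k")
    case True
    hence e: "(k+1) div 2 = k div 2" "(k+2) div 2 = k div 2 + 1" by presburger+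
    have "ge2 (k div 2 + 1) (u+u')" using exact2[of "k div 2" u u'] hx hy e by auto
    moreover have "ge2 (k div 2) (v + v')" using ge2_add hx hy by auto
    ultimately show ?thesis using x y e by (simp add: ps_iff add.assoc)
  next
    case False
    hence e: "(k+1) div 2 = k div 2 + 1" "(k+2) div 2 = k div 2 + 1" by presburger+
    have "ge2 (k div 2 + 1) (v+v')" using exact2[of "k div 2" v v'] hx hy e by auto
    moreover have "ge2 (k div 2 + 1) (u + u')" using ge2_add hx hy e by auto
    ultimately show ?thesis using x y e by (simp add: ps_iff add.assoc)
  qed
qed

lemma qmul_components: "qmul d (u,v) (u',v') = (u*u' + d*v*v', u*v' + v*u')"
  by (simp add: qmul_def)

lemma norm_mult: "(fst (x\<cdot>y))^2 - d * (snd (x\<cdot>y))^2 = ((fst x)^2 - d*(snd x)^2) * ((fst y)^2 - d*(snd y)^2)"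
  by (simp add: qmul_def power2_eq_square algebra_simps)

lemma mul_nz: "x \<noteq> 0 \<Longrightarrow> y \<noteq> 0 \<Longrightarrow> x \<cdot> y \<noteq> 0"
proof -
  assume a: "x \<noteq> 0" "y \<noteq> 0"
  have "(fst x)^2 - d*(snd x)^2 \<noteq> 0" "(fst y)^2 - d*(snd y)^2 \<noteq> 0"
    using norm_nz[of "fst x" "snd x"] norm_nz[of "fst y" "snd y"] a by (auto simp: zero_prod_def prod_eq_iff)
  hence "(fst (x\<cdot>y))^2 - d * (snd (x\<cdot>y))^2 \<noteq> 0" using norm_mult by simp
  thus "x \<cdot> y \<noteq> 0" by (auto simp: zero_prod_def)
qed

lemma vpi_mult: "x \<noteq> 0 \<Longrightarrow> y \<noteq> 0 \<Longrightarrow> vpi d (x \<cdot> y) = vpi d x + vpi d y"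
proof -
  assume a: "x \<noteq> 0" "y \<noteq> 0"
  have "(fst x)^2 - d*(snd x)^2 \<noteq> 0" "(fst y)^2 - d*(snd y)^2 \<noteq> 0"
    using norm_nz[of "fst x" "snd x"] norm_nz[of "fst y" "snd y"] a by (auto simp: zero_prod_def prod_eq_iff)
  thus ?thesis unfolding vpi_def using norm_mult[of x y] v2_mult by (simp add: case_prod_unfold)
qed

lemma mul0[simp]: "x \<cdot> (0,0) = (0,0)" "(0,0) \<cdot> x = (0,0)" by (simp_all add: qmul_def zero_prod_def)

lemma ps_mul: "ps M x \<Longrightarrow> ps N y \<Longrightarrow> ps (M+N) (x \<cdot> y)"
proof -
  assume a: "ps M x" "ps N y"
  show ?thesis
  proof (cases "x = 0 \<or> y = 0")
    case True thus ?thesis by auto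
  next
    case False
    thus ?thesis using a vpi_mult[of x y] mul_nz[of x y] by (auto simp: pi_small_def zero_prod_def)
  qed
qed

lemma ex_mul: "ex k x \<Longrightarrow> ex l y \<Longrightarrow> ex (k+l) (x \<cdot> y)"
  using mul_nz vpi_mult by (auto simp: ex_iff)

end

declare pair0[simp del]

context QD begin

definition s :: complex where "s = csqrt (of_rat d)"
lemma s2: "s^2 = of_rat d" unfolding s_def by (simp add: power2_csqrt)

definition emb :: "rat\<times>rat \<Rightarrow> complex" where "emb x = of_rat (fst x) + of_rat (snd x) * s"

lemma emb_add: "emb (x+y) = emb x + emb y" by (simp add: emb_def of_rat_add algebra_simps)
lemma emb_neg: "emb (-x) = - emb x" by (simp add: emb_def of_rat_minus)
lemma emb_diff: "emb (x-y) = emb x - emb y" by (simp add: emb_def of_rat_diff algebra_simps)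
lemma emb_0: "emb (0,0) = 0" by (simp add: emb_def)
lemma emb_mul: "emb (x \<cdot> y) = emb x * emb y"
proof -
  have "emb (x \<cdot> y) = of_rat (fst x) * of_rat (fst y) + of_rat d * of_rat (snd x) * of_rat (snd y)
        + (of_rat (fst x) * of_rat (snd y) + of_rat (snd x) * of_rat (fst y)) * s"
    by (simp add: emb_def qmul_def of_rat_add of_rat_mult)
  also have "\<dots> = emb x * emb y" unfolding emb_def s2[symmetric] by (simp add: power2_eq_square algebra_simps)
  finally show ?thesis .
qed
lemma emb_rc: "emb (c, 0) = of_rat c" by (simp add: emb_def)
lemma emb_pi: "emb (0, 1) = s" by (simp add: emb_def)

lemma emb_inj: assumes "emb x = emb y" shows "x = y"
proof -
  obtain u v where uv: "x - y = (u,v)" by (cases "x-y")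
  have "emb (x - y) = 0" using assms emb_diff by simp
  hence "of_rat u + of_rat v * s = 0" using uv by (simp add: emb_def)
  hence "of_rat u = - (of_rat v * s)" by (simp add: eq_neg_iff_add_eq_0)
  hence "(of_rat u)^2 = (of_rat v)^2 * s^2" by (simp add: power_mult_distrib)
  hence "of_rat (u^2) = (of_rat (d * v^2) :: complex)" using s2 by (simp add: of_rat_mult of_rat_power mult.commute)
  hence "u^2 = d * v^2" using of_rat_eq_iff by blast
  hence "(u,v) = (0,0)" using norm_nz[of u v] by (auto simp: zero_prod_def)
  thus ?thesis using uv by (simp add: prod_eq_iff)
qed

lemma emb_sum: "emb (sum f A) = (\<Sum>i\<in>A. emb (f i))"
  by (induction A rule: infinite_finite_induct) (simp_all add: emb_0 emb_add zero_prod_def)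

lemma emb_p4: "emb (qpow4 d x) = (emb x)^4"
  by (simp add: qpow4_def emb_mul power4_eq_xxxx)

abbreviation rc :: "rat \<Rightarrow> rat\<times>rat" where "rc c \<equiv> (c, 0)"

definition Fn where "Fn A R X = A \<cdot> qpow4 d X + R"
definition stp where "stp A R X = X - rc (1/4) \<cdot> Fn A R X"

lemma newton_id:
  "Fn A R (stp A R X) = Fn A R X \<cdot> (rc 1 - A \<cdot> X \<cdot> X \<cdot> X)
     + rc (3/8) \<cdot> A \<cdot> X \<cdot> X \<cdot> Fn A R X \<cdot> Fn A R X
     + rc (-1/16) \<cdot> A \<cdot> X \<cdot> Fn A R X \<cdot> Fn A R X \<cdot> Fn A R X
     + rc (1/256) \<cdot> A \<cdot> Fn A R X \<cdot> Fn A R X \<cdot> Fn A R X \<cdot> Fn A R X"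
proof (rule emb_inj)
  define a r x where "a = emb A" "r = emb R" "x = emb X"
  have e: "emb (Fn A R X) = a * x^4 + r" by (simp add: Fn_def emb_add emb_mul emb_p4 a_r_x_def)
  show "emb (Fn A R (stp A R X)) = emb (Fn A R X \<cdot> (rc 1 - A \<cdot> X \<cdot> X \<cdot> X)
     + rc (3/8) \<cdot> A \<cdot> X \<cdot> X \<cdot> Fn A R X \<cdot> Fn A R X
     + rc (-1/16) \<cdot> A \<cdot> X \<cdot> Fn A R X \<cdot> Fn A R X \<cdot> Fn A R X
     + rc (1/256) \<cdot> A \<cdot> Fn A R X \<cdot> Fn A R X \<cdot> Fn A R X \<cdot> Fn A R X)"
    unfolding emb_add emb_mul emb_diff emb_rc e
    by (simp add: stp_def Fn_def emb_add emb_mul emb_diff emb_rc emb_p4 a_r_x_def of_rat_divide of_rat_minus)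
       (simp add: field_simps power4_eq_xxxx power3_eq_cube power2_eq_square; algebra)
qed

end

lemma m2_1: "m2 1 = 0" by (rule m2_odd) simp
lemma m2_3: "m2 3 = 0" by (rule m2_odd) simp
lemma m2_4: "m2 4 = 2" using m2_2k[of 2] m2_2k[of 1] m2_1 by simp
lemma m2_8: "m2 8 = 3" using m2_2k[of 4] m2_4 by simp
lemma m2_16: "m2 16 = 4" using m2_2k[of 8] m2_8 by simp
lemma m2_256: "m2 256 = 8" using m2_2k[of 128] m2_2k[of 64] m2_2k[of 32] m2_2k[of 16] m2_16 by simp

lemma v2_1: "v2 1 = 0" using v2_int[of 1] m2_1 by simp
lemma v2_14: "v2 (1/4) = -2" using v2_frac[of 1 4] m2_1 m2_4 by simp
lemma v2_38: "v2 (3/8) = -3" using v2_frac[of 3 8] m2_3 m2_8 by simp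
lemma v2_116: "v2 (-1/16) = -4" using v2_frac[of "-1" 16] m2_1 m2_16 v2_neg[of "1/16"]
  by (simp add: m2_def)
lemma v2_1256: "v2 (1/256) = -8" using v2_frac[of 1 256] m2_1 m2_256 by simp

context QD begin

lemma ps_zero'[simp]: "ps N 0" by (simp add: pi_small_def zero_prod_def)

lemma ps_rc: "ps N (rc c) \<longleftrightarrow> ge2 ((N+1) div 2) c"
  using ps_iff[of N c 0] by (simp add: ge2_def)

lemma ps_14: "ps (-4) (rc (1/4))" by (simp add: ps_rc ge2_def v2_14)
lemma ps_38: "ps (-6) (rc (3/8))" by (simp add: ps_rc ge2_def v2_38)
lemma ps_116: "ps (-8) (rc (-1/16))" using v2_116 by (simp add: ps_rc ge2_def)
lemma ps_1256: "ps (-16) (rc (1/256))" by (simp add: ps_rc ge2_def v2_1256)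
lemma ex_1: "ex 0 (rc 1)" by (simp add: ex_def ps_rc ge2_def v2_1)

lemma ps_of_ex: "ex k a \<Longrightarrow> ps k a" by (simp add: ex_def)
lemma ex_neg: "ex k (-a) = ex k a" by (simp add: ex_def ps_neg)
lemma ex_add_small: assumes "ex k a" "ps (k+1) b" shows "ex k (a + b)"
proof -
  have "ps k (a+b)" using assms ps_add[of k a b] ps_mono[of "k+1" b k] by (auto simp: ex_def)
  moreover have "\<not> ps (k+1) (a+b)"
  proof
    assume "ps (k+1) (a+b)"
    hence "ps (k+1) ((a+b) - b)" using ps_diff assms(2) by blast
    thus False using assms(1) by (simp add: ex_def)
  qed
  ultimately show ?thesis by (simp add: ex_def)
qed

lemma newton_step:
  assumes A: "ex 0 A" and X: "ps 3 (X - rc 1)" and F: "ps (7+k) (Fn A R X)" and k: "k \<ge> 0"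
  shows "ps (3+k) (stp A R X - X) \<and> ps 3 (stp A R X - rc 1) \<and> ps (8+k) (Fn A R (stp A R X))"
proof -
  define \<delta> where "\<delta> = Fn A R X"
  have d: "ps (7+k) \<delta>" using F \<delta>_def by simp
  have s1: "stp A R X - X = - (rc (1/4) \<cdot> \<delta>)" by (simp add: stp_def \<delta>_def)
  have p1: "ps (3+k) (stp A R X - X)" unfolding s1 ps_neg using ps_mul[OF ps_14 d] by simp
  have p2: "ps 3 (stp A R X - rc 1)"
  proof -
    have e: "stp A R X - rc 1 = (X - rc 1) + (stp A R X - X)" by simp
    show ?thesis unfolding e by (rule ps_add[OF X ps_mono[OF p1]]) (use k in simp)
  qed
  have Xe: "ex 0 X"
  proof -
    have "ex 0 (rc 1 + (X - rc 1))" using ex_add_small[OF ex_1 ps_mono[OF X]] by simp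
    thus ?thesis by simp
  qed
  have A0: "ps 0 A" "ps 0 X" using A Xe ps_of_ex by auto
  have AX3: "ex 0 (A \<cdot> X \<cdot> X \<cdot> X)" using ex_mul[OF ex_mul[OF ex_mul[OF A Xe] Xe] Xe] by simp
  have q1: "ps 1 (rc 1 - A \<cdot> X \<cdot> X \<cdot> X)"
    using F2[OF ex_1, of "- (A \<cdot> X \<cdot> X \<cdot> X)"] AX3 ex_neg by simp
  have T1: "ps (8+k) (\<delta> \<cdot> (rc 1 - A \<cdot> X \<cdot> X \<cdot> X))" using ps_mul[OF d q1] by (simp add: add.commute add.left_commute)
  have T2: "ps (8+k) (rc (3/8) \<cdot> A \<cdot> X \<cdot> X \<cdot> \<delta> \<cdot> \<delta>)"
  proof -
    have h: "ps (-6+0+0+0+(7+k)+(7+k)) (rc (3/8) \<cdot> A \<cdot> X \<cdot> X \<cdot> \<delta> \<cdot> \<delta>)"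
      using ps_mul[OF ps_mul[OF ps_mul[OF ps_mul[OF ps_mul[OF ps_38 A0(1)] A0(2)] A0(2)] d] d] .
    show ?thesis by (rule ps_mono[OF h]) (use k in linarith)
  qed
  have T3: "ps (8+k) (rc (-1/16) \<cdot> A \<cdot> X \<cdot> \<delta> \<cdot> \<delta> \<cdot> \<delta>)"
  proof -
    have h: "ps (-8+0+0+(7+k)+(7+k)+(7+k)) (rc (-1/16) \<cdot> A \<cdot> X \<cdot> \<delta> \<cdot> \<delta> \<cdot> \<delta>)"
      using ps_mul[OF ps_mul[OF ps_mul[OF ps_mul[OF ps_mul[OF ps_116 A0(1)] A0(2)] d] d] d] .
    show ?thesis by (rule ps_mono[OF h]) (use k in linarith)
  qed
  have T4: "ps (8+k) (rc (1/256) \<cdot> A \<cdot> \<delta> \<cdot> \<delta> \<cdot> \<delta> \<cdot> \<delta>)"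
  proof -
    have h: "ps (-16+0+(7+k)+(7+k)+(7+k)+(7+k)) (rc (1/256) \<cdot> A \<cdot> \<delta> \<cdot> \<delta> \<cdot> \<delta> \<cdot> \<delta>)"
      using ps_mul[OF ps_mul[OF ps_mul[OF ps_mul[OF ps_mul[OF ps_1256 A0(1)] d] d] d] d] .
    show ?thesis by (rule ps_mono[OF h]) (use k in linarith)
  qed
  have "ps (8+k) (Fn A R (stp A R X))"
    unfolding newton_id \<delta>_def[symmetric] using ps_add[OF ps_add[OF ps_add[OF T1 T2] T3] T4] .
  thus ?thesis using p1 p2 by simp
qed

definition nt where "nt A R k = (stp A R ^^ k) (rc 1)"

lemma newton:
  assumes A: "ex 0 A" and F: "ps 7 (Fn A R (rc 1))"
  shows "ps 3 (nt A R k - rc 1) \<and> ps (7 + int k) (Fn A R (nt A R k)) \<and> ps (3 + int k) (nt A R (Suc k) - nt A R k)"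
proof (induction k)
  case 0
  have "ps 3 (rc 1 - rc 1)" by simp
  moreover have "ps (7+0) (Fn A R (rc 1))" using F by simp
  ultimately show ?case using newton_step[OF A, of "rc 1" 0 R] by (simp add: nt_def)
next
  case (Suc k)
  have st: "nt A R (Suc k) = stp A R (nt A R k)" by (simp add: nt_def)
  have h: "ps (3 + int k) (stp A R (nt A R k) - nt A R k) \<and> ps 3 (stp A R (nt A R k) - rc 1) \<and>
           ps (8 + int k) (Fn A R (stp A R (nt A R k)))"
    using newton_step[OF A, of "nt A R k" "int k" R] Suc.IH by simp
  have st2: "nt A R (Suc (Suc k)) = stp A R (nt A R (Suc k))" by (simp add: nt_def)
  have h2: "ps (3 + int (Suc k)) (stp A R (nt A R (Suc k)) - nt A R (Suc k))"
    using newton_step[OF A, of "nt A R (Suc k)" "int (Suc k)" R] h st by (simp add: add.commute add.left_commute)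
  show ?case using h h2 st st2 by (simp add: add.commute add.left_commute)
qed

end

lemma m2_pw: "\<not> 2 dvd w \<Longrightarrow> m2 (2^k * w) = int k"
  unfolding m2_def by (subst multiplicity_decomposeI[of _ 2 k w]) auto
lemma v2_pw: "\<not> 2 dvd w \<Longrightarrow> v2 (of_int (2^k * w)) = int k"
  using v2_int[of "2^k*w"] m2_pw[of w k] by (cases "w = 0") auto

context QD begin

definition piE :: "rat\<times>rat" where "piE = (0,1)"
definition tE :: "rat\<times>rat" where "tE = (1,1)"

lemma ex_pi: "ex 1 piE"
proof -
  have "v2 (-d) = 1" using v2d v2_neg by simp
  thus ?thesis by (auto simp: ex_def piE_def ps_iff ge2_def v2_1)
qed

lemma ex_p4: "ex k x \<Longrightarrow> ex (4*k) (qpow4 d x)"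
proof -
  assume h: "ex k x"
  have "ex ((k+k)+(k+k)) (qpow4 d x)" unfolding qpow4_def by (intro ex_mul h)
  moreover have "(k+k)+(k+k) = 4*k" by simp
  ultimately show ?thesis by simp
qed

lemma ex_pi4: "ex 4 (qpow4 d piE)" using ex_p4[OF ex_pi] by simp

lemma tE4: "qpow4 d tE - rc 1 = (d^2 + 6*d, 4 + 4*d)"
proof -
  have "qmul d tE tE = (1 + d, 2)" by (simp add: qmul_def tE_def)
  hence "qpow4 d tE = qmul d (1+d, 2) (1+d, 2)" by (simp add: qpow4_def)
  hence "qpow4 d tE = ((1+d)*(1+d) + d*2*2, (1+d)*2 + 2*(1+d))" by (simp add: qmul_def)
  thus ?thesis by (simp add: power2_eq_square algebra_simps)
qed

lemma ex_te: "ex 5 (qpow4 d tE - rc 1)"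
proof -
  have "v2 (d^2 + 6*d) \<ge> 3 \<and> v2 (4 + 4*d) = 2"
  proof -
    have a: "v2 (16::rat) = 4" using v2_pw[of 1 4] by simp
    have b: "v2 (160::rat) = 5" using v2_pw[of 5 5] by simp
    have c: "v2 (-8::rat) = 3" using v2_pw[of "-1" 3] by simp
    have e: "v2 (40::rat) = 3" using v2_pw[of 5 3] by simp
    have f: "v2 (12::rat) = 2" using v2_pw[of 3 2] by simp
    have g: "v2 (44::rat) = 2" using v2_pw[of 11 2] by simp
    have h: "v2 (-4::rat) = 2" using v2_pw[of "-1" 2] by simp
    have i: "v2 (-36::rat) = 2" using v2_pw[of "-9" 2] by simp
    show ?thesis using dS a b c e f g h i by auto
  qed
  hence "v2 (d^2 + 6*d) \<ge> 3" "v2 (4 + 4*d) = 2" by auto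
  moreover have "4 + 4*d \<noteq> 0" using dS by auto
  ultimately show ?thesis unfolding tE4 by (auto simp: ex_def ps_iff ge2_def)
qed

lemma tri: assumes "ps k y" "ex k e" shows "\<exists>f. ps (k+1) (y + (if f then e else 0))"
proof (cases "ps (k+1) y")
  case True thus ?thesis by (intro exI[of _ False]) simp
next
  case False
  hence "ex k y" using assms by (simp add: ex_def)
  thus ?thesis using F2[OF _ assms(2)] by (intro exI[of _ True]) simp
qed

lemma emb_if: "emb (if f then a else b) = (if f then emb a else emb b)" by simp

lemma comb0:
  assumes ai: "ex 0 ai" and aj: "ex 0 aj" and ak: "ex 0 ak" and s2: "ps 2 (ai + aj)"
    and b0: "ex 2 b0" and b1: "ex 2 b1" and c: "ex 3 c"
  shows "\<exists>ej ek eb0 eb1 ec. ps 0 ej \<and> ps 0 ek \<and> ps 0 eb0 \<and> ps 0 eb1 \<and> ps 0 ec \<and>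
     ps 7 (ai \<cdot> qpow4 d (rc 1) + aj \<cdot> qpow4 d ej + ak \<cdot> qpow4 d ek + b0 \<cdot> qpow4 d eb0
           + b1 \<cdot> qpow4 d eb1 + c \<cdot> qpow4 d ec)"
proof -
  obtain f0 where y0: "ps 3 (ai + aj + (if f0 then b0 else 0))"
  proof (cases "ps 3 (ai + aj)")
    case True thus ?thesis using that[of False] by simp
  next
    case False
    hence "ex 2 (ai + aj)" using s2 by (simp add: ex_def)
    thus ?thesis using that[of True] F2[OF _ b0] by simp
  qed
  obtain f1 where y1: "ps 4 (ai + aj + (if f0 then b0 else 0) + (if f1 then c else 0))"
    using tri[OF y0 c] by auto
  have e2: "ex 4 (ak \<cdot> qpow4 d piE)" using ex_mul[OF ak ex_pi4] by simp
  obtain f2 where y2: "ps 5 (ai + aj + (if f0 then b0 else 0) + (if f1 then c else 0)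
      + (if f2 then ak \<cdot> qpow4 d piE else 0))"
    using tri[OF y1 e2] by auto
  have e3: "ex 5 (aj \<cdot> (qpow4 d tE - rc 1))" using ex_mul[OF aj ex_te] by simp
  obtain f3 where y3: "ps 6 (ai + aj + (if f0 then b0 else 0) + (if f1 then c else 0)
      + (if f2 then ak \<cdot> qpow4 d piE else 0) + (if f3 then aj \<cdot> (qpow4 d tE - rc 1) else 0))"
    using tri[OF y2 e3] by auto
  have e4: "ex 6 (b1 \<cdot> qpow4 d piE)" using ex_mul[OF b1 ex_pi4] by simp
  obtain f4 where y4: "ps 7 (ai + aj + (if f0 then b0 else 0) + (if f1 then c else 0)
      + (if f2 then ak \<cdot> qpow4 d piE else 0) + (if f3 then aj \<cdot> (qpow4 d tE - rc 1) else 0)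
      + (if f4 then b1 \<cdot> qpow4 d piE else 0))"
    using tri[OF y3 e4] by auto
  define ej where "ej = (if f3 then tE else rc 1)"
  define ek where "ek = (if f2 then piE else 0)"
  define eb0 where "eb0 = (if f0 then rc 1 else 0)"
  define eb1 where "eb1 = (if f4 then piE else 0)"
  define ec where "ec = (if f1 then rc 1 else 0)"
  have eq: "ai \<cdot> qpow4 d (rc 1) + aj \<cdot> qpow4 d ej + ak \<cdot> qpow4 d ek + b0 \<cdot> qpow4 d eb0
           + b1 \<cdot> qpow4 d eb1 + c \<cdot> qpow4 d ec =
     ai + aj + (if f0 then b0 else 0) + (if f1 then c else 0)
      + (if f2 then ak \<cdot> qpow4 d piE else 0) + (if f3 then aj \<cdot> (qpow4 d tE - rc 1) else 0)
      + (if f4 then b1 \<cdot> qpow4 d piE else 0)"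
    apply (rule emb_inj)
    unfolding ej_def ek_def eb0_def eb1_def ec_def
    by (cases f0; cases f1; cases f2; cases f3; cases f4)
       (simp_all add: emb_add emb_mul emb_diff emb_p4 emb_rc algebra_simps zero_prod_def)
  have p1: "ps 0 tE" by (simp add: tE_def ps_iff ge2_def v2_1)
  have p2: "ps 0 piE" using ps_mono[OF ps_of_ex[OF ex_pi]] by simp
  have p3: "ps 0 (rc 1)" using ps_of_ex[OF ex_1] .
  note p = p1 p2 p3
  show ?thesis
    apply (rule exI[of _ ej], rule exI[of _ ek], rule exI[of _ eb0], rule exI[of _ eb1], rule exI[of _ ec])
    using y4 p unfolding eq by (simp add: ej_def ek_def eb0_def eb1_def ec_def)
qed


lemma sum6: "(\<Sum>m<6. f m) = f 0 + f 1 + f 2 + f 3 + f 4 + f 5" for f :: "nat \<Rightarrow> 'a::comm_monoid_add"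
  by (simp add: eval_nat_numeral)

lemma comb:
  fixes A :: "nat \<Rightarrow> rat \<times> rat"
  assumes a0: "ex 0 (A 0)" and a1: "ex 0 (A 1)" and a2: "ex 0 (A 2)"
    and b0: "ex 2 (A 3)" and b1: "ex 2 (A 4)" and c: "ex 3 (A 5)"
  shows "\<exists>i<3. \<exists>cc. cc i = rc 1 \<and> (\<forall>m. ps 0 (cc m)) \<and> ps 7 (\<Sum>m<6. A m \<cdot> qpow4 d (cc m))"
proof -
  have key: "ps 2 (A 0 + A 1) \<or> ps 2 (A 0 + A 2) \<or> ps 2 (A 1 + A 2)"
  proof (rule ccontr)
    assume h: "\<not> ?thesis"
    have e1: "ex 1 (A 0 + A 1)" using F2[OF a0 a1] h by (simp add: ex_def)
    have e2: "ex 1 (A 0 + A 2)" using F2[OF a0 a2] h by (simp add: ex_def)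
    have p: "ps 2 ((A 0 + A 1) + (A 0 + A 2))" using F2[OF e1 e2] by simp
    have "A 0 + A 0 = rc 2 \<cdot> A 0" by (simp add: qmul_def prod_eq_iff)
    moreover have "ps 2 (rc 2)" by (simp add: ps_rc ge2_def v2_2)
    ultimately have q: "ps 2 (A 0 + A 0)" using ps_mul[OF _ ps_of_ex[OF a0]] by fastforce
    have "A 1 + A 2 = ((A 0 + A 1) + (A 0 + A 2)) - (A 0 + A 0)" by (simp add: algebra_simps)
    hence "ps 2 (A 1 + A 2)" using ps_diff[OF p q] by simp
    thus False using h by simp
  qed
  have r1: "ps 0 (rc 1)" using ps_of_ex[OF ex_1] .
  show ?thesis
  proof (cases "ps 2 (A 0 + A 1)")
    case True
    obtain ej ek eb0 eb1 ec where e: "ps 0 ej" "ps 0 ek" "ps 0 eb0" "ps 0 eb1" "ps 0 ec"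
      "ps 7 (A 0 \<cdot> qpow4 d (rc 1) + A 1 \<cdot> qpow4 d ej + A 2 \<cdot> qpow4 d ek + A 3 \<cdot> qpow4 d eb0
           + A 4 \<cdot> qpow4 d eb1 + A 5 \<cdot> qpow4 d ec)"
      using comb0[OF a0 a1 a2 True b0 b1 c] by blast
    define cc where "cc = (\<lambda>m::nat. if m = 0 then rc 1 else if m = 1 then ej else if m = 2 then ek
       else if m = 3 then eb0 else if m = 4 then eb1 else if m = 5 then ec else 0)"
    show ?thesis
      by (rule exI[of _ 0], simp, rule exI[of _ cc]) (use e r1 in \<open>auto simp: cc_def sum6\<close>)
  next
    case F1: False
    show ?thesis
    proof (cases "ps 2 (A 0 + A 2)")
      case True
      obtain ej ek eb0 eb1 ec where e: "ps 0 ej" "ps 0 ek" "ps 0 eb0" "ps 0 eb1" "ps 0 ec"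
        "ps 7 (A 0 \<cdot> qpow4 d (rc 1) + A 2 \<cdot> qpow4 d ej + A 1 \<cdot> qpow4 d ek + A 3 \<cdot> qpow4 d eb0
             + A 4 \<cdot> qpow4 d eb1 + A 5 \<cdot> qpow4 d ec)"
        using comb0[OF a0 a2 a1 True b0 b1 c] by blast
      define cc where "cc = (\<lambda>m::nat. if m = 0 then rc 1 else if m = 1 then ek else if m = 2 then ej
         else if m = 3 then eb0 else if m = 4 then eb1 else if m = 5 then ec else 0)"
      have "(\<Sum>m<6. A m \<cdot> qpow4 d (cc m)) = A 0 \<cdot> qpow4 d (rc 1) + A 2 \<cdot> qpow4 d ej + A 1 \<cdot> qpow4 d ek + A 3 \<cdot> qpow4 d eb0
             + A 4 \<cdot> qpow4 d eb1 + A 5 \<cdot> qpow4 d ec"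
        by (simp add: sum6 cc_def ac_simps)
      thus ?thesis
        by (intro exI[of _ 0]) (use e r1 in \<open>auto simp: cc_def intro!: exI[of _ cc]\<close>)
    next
      case False
      hence True: "ps 2 (A 1 + A 2)" using key F1 by simp
      obtain ej ek eb0 eb1 ec where e: "ps 0 ej" "ps 0 ek" "ps 0 eb0" "ps 0 eb1" "ps 0 ec"
        "ps 7 (A 1 \<cdot> qpow4 d (rc 1) + A 2 \<cdot> qpow4 d ej + A 0 \<cdot> qpow4 d ek + A 3 \<cdot> qpow4 d eb0
             + A 4 \<cdot> qpow4 d eb1 + A 5 \<cdot> qpow4 d ec)"
        using comb0[OF a1 a2 a0 True b0 b1 c] by blast
      define cc where "cc = (\<lambda>m::nat. if m = 0 then ek else if m = 1 then rc 1 else if m = 2 then ej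
         else if m = 3 then eb0 else if m = 4 then eb1 else if m = 5 then ec else 0)"
      have "(\<Sum>m<6. A m \<cdot> qpow4 d (cc m)) = A 1 \<cdot> qpow4 d (rc 1) + A 2 \<cdot> qpow4 d ej + A 0 \<cdot> qpow4 d ek + A 3 \<cdot> qpow4 d eb0
             + A 4 \<cdot> qpow4 d eb1 + A 5 \<cdot> qpow4 d ec"
        by (simp add: sum6 cc_def ac_simps)
      thus ?thesis
        by (intro exI[of _ 1]) (use e r1 in \<open>auto simp: cc_def intro!: exI[of _ cc]\<close>)
    qed
  qed
qed

end

lemma finite_ev:
  fixes k :: nat and Q :: "nat \<Rightarrow> nat \<Rightarrow> bool"
  assumes "\<forall>m<k. \<exists>M. \<forall>n\<ge>M. Q m n"
  shows "\<exists>M. \<forall>m<k. \<forall>n\<ge>M. Q m n"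
  using assms
proof (induction k)
  case 0 thus ?case by simp
next
  case (Suc k)
  obtain M1 where M1: "\<forall>m<k. \<forall>n\<ge>M1. Q m n" using Suc by auto
  obtain M2 where M2: "\<forall>n\<ge>M2. Q k n" using Suc.prems by auto
  have "\<forall>m<Suc k. \<forall>n\<ge>max M1 M2. Q m n"
  proof (intro allI impI)
    fix m n assume "m < Suc k" "n \<ge> max M1 M2"
    thus "Q m n" using M1 M2 by (cases "m = k") (auto simp: less_Suc_eq)
  qed
  thus ?case by blast
qed

context QD begin

lemma qsub_eq: "qsub x y = x - y" by (simp add: qsub_def prod_eq_iff)

lemma cauchy_iff: "K_cauchy d sq \<longleftrightarrow> (\<forall>N. \<exists>M. \<forall>m\<ge>M. \<forall>n\<ge>M. ps N (sq m - sq n))"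
  by (simp add: K_cauchy_def qsub_eq)

lemma cauchy_const: "K_cauchy d (\<lambda>n. c)" by (simp add: cauchy_iff)

lemma cauchy_add:
  assumes "K_cauchy d sq" "K_cauchy d t" shows "K_cauchy d (\<lambda>n. sq n + t n)"
  unfolding cauchy_iff
proof
  fix N
  obtain M1 where M1: "\<forall>m\<ge>M1. \<forall>n\<ge>M1. ps N (sq m - sq n)" using assms(1) cauchy_iff by blast
  obtain M2 where M2: "\<forall>m\<ge>M2. \<forall>n\<ge>M2. ps N (t m - t n)" using assms(2) cauchy_iff by blast
  have "\<forall>m\<ge>max M1 M2. \<forall>n\<ge>max M1 M2. ps N ((sq m + t m) - (sq n + t n))"
  proof (intro allI impI)
    fix m n assume "m \<ge> max M1 M2" "n \<ge> max M1 M2"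
    hence "ps N ((sq m - sq n) + (t m - t n))" using M1 M2 ps_add by simp
    thus "ps N ((sq m + t m) - (sq n + t n))" by (simp add: algebra_simps)
  qed
  thus "\<exists>M. \<forall>m\<ge>M. \<forall>n\<ge>M. ps N ((sq m + t m) - (sq n + t n))" by blast
qed

lemma cauchy_neg: assumes "K_cauchy d sq" shows "K_cauchy d (\<lambda>n. - sq n)"
proof -
  have "ps N (- sq m - - sq n) = ps N (sq m - sq n)" for N m n
    using ps_neg[of N "sq m - sq n"] by (simp add: algebra_simps)
  thus ?thesis using assms by (simp add: cauchy_iff)
qed

lemma cauchy_diff: "K_cauchy d sq \<Longrightarrow> K_cauchy d t \<Longrightarrow> K_cauchy d (\<lambda>n. sq n - t n)"
  using cauchy_add[of sq "\<lambda>n. - t n"] cauchy_neg[of t] by simp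

lemma cauchy_bounded: assumes "K_cauchy d sq" shows "\<exists>B M. \<forall>n\<ge>M. ps B (sq n)"
proof -
  obtain M where M: "\<forall>m\<ge>M. \<forall>n\<ge>M. ps 0 (sq m - sq n)" using assms cauchy_iff by blast
  obtain B0 where B0: "ps B0 (sq M)" using ps_exists by blast
  have "\<forall>n\<ge>M. ps (min B0 0) (sq n)"
  proof (intro allI impI)
    fix n assume "n \<ge> M"
    have a: "ps (min B0 0) (sq M)" using ps_mono[OF B0] by simp
    have b: "ps (min B0 0) (sq n - sq M)" using ps_mono[of 0 "sq n - sq M"] M \<open>n \<ge> M\<close> by simp
    have "ps (min B0 0) (sq M + (sq n - sq M))" using ps_add[OF a b] .
    thus "ps (min B0 0) (sq n)" by simp
  qed
  thus ?thesis by blast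
qed

lemma mul_diff_distrib: "(a - b) \<cdot> c = a \<cdot> c - b \<cdot> c" by (rule emb_inj) (simp add: emb_mul emb_diff algebra_simps)
lemma mul_add_distrib: "(a + b) \<cdot> c = a \<cdot> c + b \<cdot> c" by (rule emb_inj) (simp add: emb_mul emb_add algebra_simps)
lemma mul_comm: "a \<cdot> b = b \<cdot> a" by (rule emb_inj) (simp add: emb_mul algebra_simps)

lemma cauchy_mul:
  assumes sq: "K_cauchy d sq" and t: "K_cauchy d t" shows "K_cauchy d (\<lambda>n. sq n \<cdot> t n)"
  unfolding cauchy_iff
proof
  fix N
  obtain Bs Ms where Bs: "\<forall>n\<ge>Ms. ps Bs (sq n)" using cauchy_bounded[OF sq] by blast
  obtain Bt Mt where Bt: "\<forall>n\<ge>Mt. ps Bt (t n)" using cauchy_bounded[OF t] by blast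
  obtain M1 where M1: "\<forall>m\<ge>M1. \<forall>n\<ge>M1. ps (N - Bt) (sq m - sq n)" using sq cauchy_iff by blast
  obtain M2 where M2: "\<forall>m\<ge>M2. \<forall>n\<ge>M2. ps (N - Bs) (t m - t n)" using t cauchy_iff by blast
  define M where "M = max (max Ms Mt) (max M1 M2)"
  have "\<forall>m\<ge>M. \<forall>n\<ge>M. ps N (sq m \<cdot> t m - sq n \<cdot> t n)"
  proof (intro allI impI)
    fix m n assume mn: "m \<ge> M" "n \<ge> M"
    have e: "sq m \<cdot> t m - sq n \<cdot> t n = (t m - t n) \<cdot> sq m + (sq m - sq n) \<cdot> t n"
      by (rule emb_inj) (simp add: emb_mul emb_diff emb_add algebra_simps)
    have "ps (N - Bs) (t m - t n)" "ps Bs (sq m)" using M2 Bs mn M_def by auto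
    hence 1: "ps (N - Bs + Bs) ((t m - t n) \<cdot> sq m)" by (rule ps_mul)
    have "ps (N - Bt) (sq m - sq n)" "ps Bt (t n)" using M1 Bt mn M_def by auto
    hence 2: "ps (N - Bt + Bt) ((sq m - sq n) \<cdot> t n)" by (rule ps_mul)
    show "ps N (sq m \<cdot> t m - sq n \<cdot> t n)" unfolding e using ps_add 1 2 by simp
  qed
  thus "\<exists>M. \<forall>m\<ge>M. \<forall>n\<ge>M. ps N (sq m \<cdot> t m - sq n \<cdot> t n)" by blast
qed

lemma cauchy_sum: "finite S \<Longrightarrow> (\<forall>m\<in>S. K_cauchy d (f m)) \<Longrightarrow> K_cauchy d (\<lambda>n. \<Sum>m\<in>S. f m n)"
proof (induction S rule: finite_induct)
  case empty thus ?case using cauchy_const[of 0] by simp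
next
  case (insert x F) thus ?case using cauchy_add[of "f x" "\<lambda>n. \<Sum>m\<in>F. f m n"] by simp
qed

lemma cauchy_p4: "K_cauchy d sq \<Longrightarrow> K_cauchy d (\<lambda>n. qpow4 d (sq n))"
  unfolding qpow4_def by (intro cauchy_mul)

lemma ps_sum: "(\<forall>m\<in>S. ps N (f m)) \<Longrightarrow> ps N (sum f S)"
proof (induction S rule: infinite_finite_induct)
  case (insert x F) thus ?case using ps_add by simp
qed simp_all

lemma ps_p4: "ps 0 x \<Longrightarrow> ps 0 (qpow4 d x)"
proof -
  assume h: "ps 0 x"
  have "ps (0+0) (x \<cdot> x)" by (rule ps_mul[OF h h])
  hence "ps (0+0) ((x \<cdot> x) \<cdot> (x \<cdot> x))" using ps_mul[of 0 "x \<cdot> x" 0 "x \<cdot> x"] by simp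
  thus ?thesis unfolding qpow4_def by simp
qed

end

context QD begin

lemma Xk_step: "nt A R (Suc k) = nt A R k - rc (1/4) \<cdot> (A \<cdot> qpow4 d (nt A R k) + R)"
  by (simp add: nt_def stp_def Fn_def)

lemma core:
  fixes A :: "nat \<Rightarrow> nat \<Rightarrow> rat \<times> rat"
  assumes cA: "\<forall>m<6. K_cauchy d (A m)"
    and lev: "\<exists>M. \<forall>n\<ge>M. ex 0 (A 0 n) \<and> ex 0 (A 1 n) \<and> ex 0 (A 2 n) \<and> ex 2 (A 3 n) \<and> ex 2 (A 4 n) \<and> ex 3 (A 5 n)"
  shows "\<exists>Y. (\<forall>m<6. K_cauchy d (Y m)) \<and> (\<exists>m<6. \<not> K_null d (Y m)) \<and>
             K_null d (\<lambda>n. \<Sum>m<6. A m n \<cdot> qpow4 d (Y m n))"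
proof -
  obtain M1 where M1: "\<forall>n\<ge>M1. ex 0 (A 0 n) \<and> ex 0 (A 1 n) \<and> ex 0 (A 2 n) \<and> ex 2 (A 3 n) \<and> ex 2 (A 4 n) \<and> ex 3 (A 5 n)"
    using lev by blast
  have "\<forall>m<6. \<exists>M. \<forall>n\<ge>M. (\<forall>p\<ge>n. \<forall>q\<ge>n. ps 7 (A m p - A m q))"
  proof (intro allI impI)
    fix m :: nat assume "m < 6"
    then obtain M where "\<forall>p\<ge>M. \<forall>q\<ge>M. ps 7 (A m p - A m q)" using cA cauchy_iff by blast
    thus "\<exists>M. \<forall>n\<ge>M. \<forall>p\<ge>n. \<forall>q\<ge>n. ps 7 (A m p - A m q)" by (intro exI[of _ M]) auto
  qed
  then obtain M2 where M2: "\<forall>m<6. \<forall>n\<ge>M2. \<forall>p\<ge>n. \<forall>q\<ge>n. ps 7 (A m p - A m q)"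
    using finite_ev[of 6 "\<lambda>m n. \<forall>p\<ge>n. \<forall>q\<ge>n. ps 7 (A m p - A m q)"] by blast
  define n0 where "n0 = max M1 M2"
  have lev0: "ex 0 (A 0 n0) \<and> ex 0 (A 1 n0) \<and> ex 0 (A 2 n0) \<and> ex 2 (A 3 n0) \<and> ex 2 (A 4 n0) \<and> ex 3 (A 5 n0)"
    using M1 n0_def by simp
  obtain i cc where i: "i < 3" "cc i = rc 1" "\<forall>m. ps 0 (cc m)" "ps 7 (\<Sum>m<6. A m n0 \<cdot> qpow4 d (cc m))"
    using comb[of "\<lambda>m. A m n0"] lev0 by blast
  have Sn: "ps 7 (\<Sum>m<6. A m n \<cdot> qpow4 d (cc m))" if n: "n \<ge> n0" for n
  proof -
    have e: "(\<Sum>m<6. A m n \<cdot> qpow4 d (cc m)) = (\<Sum>m<6. A m n0 \<cdot> qpow4 d (cc m)) + (\<Sum>m<6. (A m n - A m n0) \<cdot> qpow4 d (cc m))"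
      by (simp add: mul_diff_distrib sum_subtractf)
    have "ps 7 (\<Sum>m<6. (A m n - A m n0) \<cdot> qpow4 d (cc m))"
    proof (rule ps_sum, intro ballI)
      fix m assume "m \<in> {..<6::nat}"
      hence m6: "m < 6" by simp
      have a: "ps 7 (A m n - A m n0)" using M2[rule_format, OF m6, of n0 n n0] n n0_def by simp
      have b: "ps 0 (qpow4 d (cc m))" using ps_p4 i(3) by blast
      show "ps 7 ((A m n - A m n0) \<cdot> qpow4 d (cc m))" using ps_mul[OF a b] by simp
    qed
    thus ?thesis unfolding e using i(4) ps_add by simp
  qed
  define R where "R n = (\<Sum>m\<in>{..<6} - {i}. A m n \<cdot> qpow4 d (cc m))" for n
  define Xk where "Xk k n = nt (A i n) (R n) k" for k n
  define X where "X n = Xk n n" for n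
  define Y where "Y m = (if m = i then X else (\<lambda>n. cc m))" for m
  have FnS: "Fn (A i n) (R n) Z = (\<Sum>m<6. A m n \<cdot> qpow4 d (if m = i then Z else cc m))" for n Z
  proof -
    have "(\<Sum>m<6. A m n \<cdot> qpow4 d (if m = i then Z else cc m)) =
        A i n \<cdot> qpow4 d Z + (\<Sum>m\<in>{..<6} - {i}. A m n \<cdot> qpow4 d (if m = i then Z else cc m))"
      using i(1) by (subst sum.remove[of "{..<6}" i]) auto
    also have "(\<Sum>m\<in>{..<6} - {i}. A m n \<cdot> qpow4 d (if m = i then Z else cc m)) = R n"
      unfolding R_def by (rule sum.cong) auto
    finally show ?thesis by (simp add: Fn_def)
  qed
  have Ai: "ex 0 (A i n)" if "n \<ge> n0" for n
  proof -
    have "i = 0 \<or> i = 1 \<or> i = 2" using i(1) by auto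
    thus ?thesis using M1 that n0_def by auto
  qed
  have F1: "ps 7 (Fn (A i n) (R n) (rc 1))" if "n \<ge> n0" for n
  proof -
    have "(\<Sum>m<6. A m n \<cdot> qpow4 d (if m = i then rc 1 else cc m)) = (\<Sum>m<6. A m n \<cdot> qpow4 d (cc m))"
      using i(2) by (intro sum.cong) auto
    thus ?thesis using FnS Sn[OF that] by simp
  qed
  have newt: "ps 3 (Xk k n - rc 1) \<and> ps (7 + int k) (Fn (A i n) (R n) (Xk k n)) \<and> ps (3 + int k) (Xk (Suc k) n - Xk k n)"
    if "n \<ge> n0" for n k
    unfolding Xk_def using newton[OF Ai[OF that] F1[OF that]] by blast
  have cR: "K_cauchy d R"
    unfolding R_def
    by (rule cauchy_sum) (use cA in \<open>auto intro!: cauchy_mul cauchy_const\<close>)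
  have cAi: "K_cauchy d (A i)" using cA i(1) by simp
  have cXk: "K_cauchy d (Xk k)" for k
  proof (induction k)
    case 0 thus ?case using cauchy_const[of "rc 1"] by (simp add: Xk_def nt_def)
  next
    case (Suc k)
    have "Xk (Suc k) = (\<lambda>n. Xk k n - rc (1/4) \<cdot> (A i n \<cdot> qpow4 d (Xk k n) + R n))"
      by (rule ext) (simp add: Xk_def Xk_step)
    thus ?case using Suc cAi cR
      by (simp add: cauchy_diff cauchy_mul cauchy_const cauchy_add cauchy_p4)
  qed
  have cX: "K_cauchy d X"
    unfolding cauchy_iff
  proof
    fix N
    define k0 where "k0 = nat N"
    obtain M3 where M3: "\<forall>p\<ge>M3. \<forall>q\<ge>M3. ps N (Xk k0 p - Xk k0 q)" using cXk[of k0] cauchy_iff by blast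
    have tail: "ps N (X n - Xk k0 n)" if n: "n \<ge> max n0 k0" for n
    proof -
      have "X n - Xk k0 n = (\<Sum>j = k0..<n. Xk (Suc j) n - Xk j n)"
        using sum_Suc_diff'[of k0 n "\<lambda>j. Xk j n"] n by (simp add: X_def)
      also have "ps N \<dots>"
      proof (rule ps_sum, intro ballI)
        fix j assume "j \<in> {k0..<n}"
        hence jN: "N \<le> 3 + int j" using k0_def by auto
        have "ps (3 + int j) (Xk (Suc j) n - Xk j n)" using newt[of n j] n by simp
        thus "ps N (Xk (Suc j) n - Xk j n)" using jN by (rule ps_mono)
      qed
      finally show ?thesis .
    qed
    have "\<forall>p\<ge>max M3 (max n0 k0). \<forall>q\<ge>max M3 (max n0 k0). ps N (X p - X q)"
    proof (intro allI impI)
      fix p q assume pq: "p \<ge> max M3 (max n0 k0)" "q \<ge> max M3 (max n0 k0)"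
      have e: "X p - X q = ((X p - Xk k0 p) + (Xk k0 p - Xk k0 q)) - (X q - Xk k0 q)" by simp
      have t1: "ps N (X p - Xk k0 p)" using tail pq by simp
      have t2: "ps N (Xk k0 p - Xk k0 q)" using M3 pq by simp
      have t3: "ps N (X q - Xk k0 q)" using tail pq by simp
      show "ps N (X p - X q)" unfolding e using ps_diff[OF ps_add[OF t1 t2] t3] .
    qed
    thus "\<exists>M. \<forall>m\<ge>M. \<forall>n\<ge>M. ps N (X m - X n)" by blast
  qed
  have nnX: "\<not> K_null d X"
  proof
    assume "K_null d X"
    then obtain M where M: "\<forall>n\<ge>M. ps 1 (X n)" unfolding K_null_def by blast
    define n where "n = max M n0"
    have "ps 3 (X n - rc 1)" using newt[of n n] n_def by (simp add: X_def)
    hence "ps (0+1) (X n - rc 1)" using ps_mono by simp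
    hence "ex 0 (rc 1 + (X n - rc 1))" by (rule ex_add_small[OF ex_1])
    hence "ex 0 (X n)" by simp
    thus False using M n_def by (simp add: ex_def)
  qed
  have nullS: "K_null d (\<lambda>n. \<Sum>m<6. A m n \<cdot> qpow4 d (Y m n))"
    unfolding K_null_def
  proof
    fix N
    have "\<forall>n\<ge>max n0 (nat N). ps N (\<Sum>m<6. A m n \<cdot> qpow4 d (Y m n))"
    proof (intro allI impI)
      fix n assume n: "n \<ge> max n0 (nat N)"
      have "(\<Sum>m<6. A m n \<cdot> qpow4 d (Y m n)) = Fn (A i n) (R n) (X n)"
        unfolding FnS Y_def by (intro sum.cong) auto
      moreover have "ps (7 + int n) (Fn (A i n) (R n) (X n))" using newt[of n n] n by (simp add: X_def)
      moreover have "7 + int n \<ge> N" using n by auto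
      ultimately show "ps N (\<Sum>m<6. A m n \<cdot> qpow4 d (Y m n))" using ps_mono by auto
    qed
    thus "\<exists>M. \<forall>n\<ge>M. ps N (\<Sum>m<6. A m n \<cdot> qpow4 d (Y m n))" by blast
  qed
  have "\<forall>m<6. K_cauchy d (Y m)" using cX by (simp add: Y_def cauchy_const)
  moreover have "\<exists>m<6. \<not> K_null d (Y m)" using nnX i(1) by (intro exI[of _ i]) (simp add: Y_def)
  ultimately show ?thesis using nullS by blast
qed

end

lemma pick3: assumes "card S \<ge> 3" obtains x y z where "x \<in> S" "y \<in> S" "z \<in> S" "x \<noteq> y" "y \<noteq> z" "x \<noteq> z"
proof -
  obtain T where "T \<subseteq> S" "card T = 3" using obtain_subset_with_card_n[OF assms] by blast
  thus ?thesis using that card_3_iff[of T] by auto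
qed

lemma pick2: assumes "card S \<ge> 2" obtains x y where "x \<in> S" "y \<in> S" "x \<noteq> y"
proof -
  obtain T where "T \<subseteq> S" "card T = 2" using obtain_subset_with_card_n[OF assms] by blast
  thus ?thesis using that card_2_iff[of T] by auto
qed

lemma pick1: assumes "card S \<ge> 1" obtains x where "x \<in> S"
  using assms by (metis One_nat_def card.empty ex_in_conv not_less_eq_eq zero_le)

context QD begin

definition piI :: "rat\<times>rat" where "piI = (0, 1/d)"
definition qp :: "nat \<Rightarrow> rat\<times>rat \<Rightarrow> rat\<times>rat" where "qp n x = ((\<lambda>y. x \<cdot> y) ^^ n) (rc 1)"
definition PP :: "int \<Rightarrow> rat\<times>rat" where "PP k = (if k \<ge> 0 then qp (nat k) piE else qp (nat (-k)) piI)"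

lemma s_nz: "s \<noteq> 0" using s2 d0 by (metis of_rat_eq_0_iff power_zero_numeral)

lemma emb_qp: "emb (qp n x) = emb x ^ n"
  by (induction n) (simp_all add: qp_def emb_mul emb_rc)

lemma emb_piI: "emb piI = inverse s"
proof -
  have "emb piI = of_rat (1/d) * s" by (simp add: emb_def piI_def)
  also have "\<dots> = s / s^2" using s2 by (simp add: of_rat_divide)
  also have "\<dots> = inverse s" using s_nz by (simp add: power2_eq_square field_simps)
  finally show ?thesis .
qed

lemma emb_PP: "emb (PP k) = s powi k"
  by (simp add: PP_def emb_qp emb_piI piE_def emb_pi power_int_def power_inverse)

lemma ex_qp: "ex k x \<Longrightarrow> ex (int n * k) (qp n x)"
proof (induction n)
  case 0 thus ?case using ex_1 by (simp add: qp_def)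
next
  case (Suc n)
  have "ex (k + int n * k) (x \<cdot> qp n x)" using ex_mul[OF Suc.prems Suc.IH[OF Suc.prems]] .
  thus ?case by (simp add: qp_def algebra_simps)
qed

lemma ex_piI: "ex (-1) piI"
proof -
  have "v2 (1/d) = -1" using v2_inv[of d] v2d by (simp add: divide_inverse)
  thus ?thesis using d0 by (auto simp: ex_def piI_def ps_iff ge2_def)
qed

lemma ex_PP: "ex k (PP k)"
  using ex_qp[OF ex_pi, of "nat k"] ex_qp[OF ex_piI, of "nat (-k)"] by (cases "0 \<le> k") (auto simp: PP_def)

lemma null_cmul: assumes "K_null d sq" shows "K_null d (\<lambda>n. c \<cdot> sq n)"
  unfolding K_null_def
proof
  fix N
  obtain B where B: "ps B c" using ps_exists by blast
  obtain M where M: "\<forall>n\<ge>M. ps (N - B) (sq n)" using assms unfolding K_null_def by blast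
  have "\<forall>n\<ge>M. ps N (c \<cdot> sq n)" using ps_mul[OF B] M by (metis add.commute diff_add_cancel)
  thus "\<exists>M. \<forall>n\<ge>M. ps N (c \<cdot> sq n)" by blast
qed

lemma kval: assumes "K_cauchy d sq" "\<not> K_null d sq" shows "\<exists>M. \<forall>n\<ge>M. ex (K_val d sq) (sq n)"
proof -
  obtain N where N: "\<forall>M. \<exists>n\<ge>M. \<not> ps N (sq n)" using assms(2) unfolding K_null_def by blast
  obtain M0 where M0: "\<forall>m\<ge>M0. \<forall>n\<ge>M0. ps N (sq m - sq n)" using assms(1) cauchy_iff by blast
  obtain n1 where n1: "n1 \<ge> M0" "\<not> ps N (sq n1)" using N by blast
  define k where "k = vpi d (sq n1)"
  have nz: "sq n1 \<noteq> 0" using n1 by (auto simp: pi_small_def zero_prod_def)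
  have ek: "ex k (sq n1)" using nz by (simp add: ex_iff k_def)
  have kN: "k + 1 \<le> N" using n1 nz by (auto simp: pi_small_def k_def zero_prod_def)
  have all: "\<forall>n\<ge>M0. ex k (sq n)"
  proof (intro allI impI)
    fix n assume "n \<ge> M0"
    hence "ps (k+1) (sq n - sq n1)" using M0 n1 ps_mono kN by blast
    hence "ex k (sq n1 + (sq n - sq n1))" by (rule ex_add_small[OF ek])
    thus "ex k (sq n)" by simp
  qed
  have "K_val d sq = k"
    unfolding K_val_def
  proof (rule the_equality)
    show "\<exists>M. \<forall>n\<ge>M. vpi d (sq n) = k" using all by (auto simp: ex_iff)
  next
    fix k' assume "\<exists>M. \<forall>n\<ge>M. vpi d (sq n) = k'"
    then obtain M' where "\<forall>n\<ge>M'. vpi d (sq n) = k'" by blast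
    thus "k' = k" using all[rule_format, of "max M0 M'"] by (auto simp: ex_iff)
  qed
  thus ?thesis using all by auto
qed

end

context QD begin

lemma mul_sum: "c \<cdot> sum f S = (\<Sum>m\<in>S. c \<cdot> f m)"
  by (rule emb_inj) (simp add: emb_mul emb_sum sum_distrib_left)

lemma diag4_sum: "diag4 d r a x n = (\<Sum>i<r. a i n \<cdot> qpow4 d (x i n))"
  unfolding diag4_def by (simp add: fst_sum snd_sum prod_eq_iff)

lemma term_id:
  assumes "L = 4 * q + j"
  shows "A \<cdot> qpow4 d (PP (-q) \<cdot> Yv) = PP j \<cdot> ((A \<cdot> PP (- L)) \<cdot> qpow4 d Yv)"
proof (rule emb_inj)
  have e0: "s powi (q*4) = (s powi q)^4"
    using power_int_mult[of s q 4] by simp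
  have e1: "(s powi (-q))^4 = s powi (- (4*q))"
    using e0 by (simp add: power_int_minus power_inverse mult.commute)
  have e2: "s powi j * s powi (- L) = s powi (- (4*q))"
    using s_nz assms by (simp add: power_int_add[symmetric])
  show "emb (A \<cdot> qpow4 d (PP (-q) \<cdot> Yv)) = emb (PP j \<cdot> ((A \<cdot> PP (- L)) \<cdot> qpow4 d Yv))"
    unfolding emb_mul emb_p4 emb_PP using e1 e2
    by (simp add: power_mult_distrib algebra_simps)
qed

end


theorem mainTheorem7:
  fixes d :: rat and a :: "nat \<Rightarrow> nat \<Rightarrow> rat \<times> rat"
  assumes "d \<in> {2, 10, -2, -10}"
    and "\<forall>i<11. K_cauchy d (a i) \<and> \<not> K_null d (a i)"
    and "of_type d 11 a 3 0 2 1"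
  shows "\<exists>x :: nat \<Rightarrow> nat \<Rightarrow> rat \<times> rat.
           (\<forall>i<11. K_cauchy d (x i)) \<and> (\<exists>i<11. \<not> K_null d (x i)) \<and>
           K_null d (diag4 d 11 a x)"
proof -
  interpret QD d using assms(1) by unfold_locales
  define lv where "lv i = K_val d (a i)" for i
  from assms(3) obtain j :: int where
    c0: "card {i. i < 11 \<and> K_val d (a i) mod 4 = j mod 4} \<ge> 3" and
    c2: "card {i. i < 11 \<and> K_val d (a i) mod 4 = (j + 2) mod 4} \<ge> 2" and
    c3: "card {i. i < 11 \<and> K_val d (a i) mod 4 = (j + 3) mod 4} \<ge> 1"
    unfolding of_type_def by auto
  obtain i0 i1 i2 where h0: "i0 \<in> {i. i < 11 \<and> K_val d (a i) mod 4 = j mod 4}"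
     "i1 \<in> {i. i < 11 \<and> K_val d (a i) mod 4 = j mod 4}" "i2 \<in> {i. i < 11 \<and> K_val d (a i) mod 4 = j mod 4}"
     "i0 \<noteq> i1" "i1 \<noteq> i2" "i0 \<noteq> i2"
    by (rule pick3[OF c0])
  hence g0: "i0 < 11" "i1 < 11" "i2 < 11" "lv i0 mod 4 = j mod 4" "lv i1 mod 4 = j mod 4"
      "lv i2 mod 4 = j mod 4" "i0 \<noteq> i1" "i1 \<noteq> i2" "i0 \<noteq> i2" by (auto simp: lv_def)
  obtain i3 i4 where h2: "i3 \<in> {i. i < 11 \<and> K_val d (a i) mod 4 = (j+2) mod 4}"
     "i4 \<in> {i. i < 11 \<and> K_val d (a i) mod 4 = (j+2) mod 4}" "i3 \<noteq> i4"
    by (rule pick2[OF c2])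
  hence g2: "i3 < 11" "i4 < 11" "lv i3 mod 4 = (j+2) mod 4" "lv i4 mod 4 = (j+2) mod 4" "i3 \<noteq> i4"
    by (auto simp: lv_def)
  obtain i5 where h3: "i5 \<in> {i. i < 11 \<and> K_val d (a i) mod 4 = (j+3) mod 4}"
    by (rule pick1[OF c3])
  hence g3: "i5 < 11" "lv i5 mod 4 = (j+3) mod 4" by (auto simp: lv_def)
  have jm: "(j + k) mod 4 \<noteq> (j + l) mod 4" if "0 \<le> k" "k < 4" "0 \<le> l" "l < 4" "k \<noteq> l" for k l
  proof
    assume "(j + k) mod 4 = (j + l) mod 4"
    hence "4 dvd (j + k) - (j + l)" by (simp add: mod_eq_dvd_iff)
    hence "4 dvd k - l" by simp
    hence "\<bar>4\<bar> \<le> \<bar>k - l\<bar>" using that by (intro dvd_imp_le_int) auto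
    thus False using that by auto
  qed
  define idx where "idx m = (if m = 0 then i0 else if m = 1 then i1 else if m = 2 then i2
      else if m = 3 then i3 else if m = 4 then i4 else i5)" for m :: nat
  define r where "r m = (if m < 3 then 0 else if m < 5 then 2 else 3 :: int)" for m :: nat
  have six: "m < 6 \<Longrightarrow> m = 0 \<or> m = 1 \<or> m = 2 \<or> m = 3 \<or> m = 4 \<or> m = 5" for m :: nat by auto
  have idx11: "idx m < 11" if "m < 6" for m using g0(1-3) g2(1,2) g3(1) by (simp add: idx_def)
  have lvr: "lv (idx m) mod 4 = (j + r m) mod 4" if "m < 6" for m
    using that g0(4-6) g2(3,4) g3(2) by (simp add: idx_def r_def)
  have Lx: "idx m = [i0,i1,i2,i3,i4,i5] ! m" if "m < 6" for m
    using six[OF that] by (elim disjE) (simp_all add: idx_def)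
  have jm02: "j mod 4 \<noteq> (j+2) mod 4" using jm[of 0 2] by simp
  have jm03: "j mod 4 \<noteq> (j+3) mod 4" using jm[of 0 3] by simp
  have jm23: "(j+2) mod 4 \<noteq> (j+3) mod 4" using jm[of 2 3] by simp
  have "i0 \<noteq> i3" "i0 \<noteq> i4" "i1 \<noteq> i3" "i1 \<noteq> i4" "i2 \<noteq> i3" "i2 \<noteq> i4"
    using g0(4-6) g2(3,4) jm02 by metis+
  moreover have "i0 \<noteq> i5" "i1 \<noteq> i5" "i2 \<noteq> i5"
    using g0(4-6) g3(2) jm03 by metis+
  moreover have "i3 \<noteq> i5" "i4 \<noteq> i5"
    using g2(3,4) g3(2) jm23 by metis+
  ultimately have dist: "distinct [i0,i1,i2,i3,i4,i5]" using g0(7-9) g2(5) by auto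
  have inj: "inj_on idx {..<6}"
  proof (rule inj_onI)
    fix m m' assume m: "m \<in> {..<6::nat}" and m': "m' \<in> {..<6::nat}" and e: "idx m = idx m'"
    have mm: "m < 6" "m' < 6" using m m' by auto
    show "m = m'" using e Lx[OF mm(1)] Lx[OF mm(2)] nth_eq_iff_index_eq[OF dist] mm by simp
  qed
  define q where "q m = (lv (idx m) - r m - j) div 4" for m
  have q4: "lv (idx m) - r m = 4 * q m + j" if "m < 6" for m
  proof -
    have "4 dvd lv (idx m) - (j + r m)" using lvr[OF that] by (simp add: mod_eq_dvd_iff)
    moreover have "lv (idx m) - (j + r m) = lv (idx m) - r m - j" by simp
    ultimately have "4 dvd lv (idx m) - r m - j" by metis
    then obtain t where t: "lv (idx m) - r m - j = 4 * t" by (elim dvdE)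
    hence "q m = t" unfolding q_def by simp
    thus ?thesis using t by simp
  qed
  define Co where "Co m n = a (idx m) n \<cdot> PP (- (lv (idx m) - r m))" for m n
  have cCo: "\<forall>m<6. K_cauchy d (Co m)"
    using assms(2) idx11 unfolding Co_def by (auto intro!: cauchy_mul cauchy_const)
  have "\<forall>m<6. \<exists>M. \<forall>n\<ge>M. ex (lv (idx m)) (a (idx m) n)"
    using kval assms(2) idx11 unfolding lv_def by blast
  then obtain M where M: "\<forall>m<6. \<forall>n\<ge>M. ex (lv (idx m)) (a (idx m) n)"
    using finite_ev[of 6 "\<lambda>m n. ex (lv (idx m)) (a (idx m) n)"] by blast
  have exCo: "ex (r m) (Co m n)" if "m < 6" "n \<ge> M" for m n
    using ex_mul[OF M[rule_format, OF that] ex_PP[of "- (lv (idx m) - r m)"]] unfolding Co_def by simp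
  have lev: "\<exists>M. \<forall>n\<ge>M. ex 0 (Co 0 n) \<and> ex 0 (Co 1 n) \<and> ex 0 (Co 2 n) \<and> ex 2 (Co 3 n) \<and> ex 2 (Co 4 n) \<and> ex 3 (Co 5 n)"
  proof (intro exI[of _ M] allI impI)
    fix n assume n: "n \<ge> M"
    show "ex 0 (Co 0 n) \<and> ex 0 (Co 1 n) \<and> ex 0 (Co 2 n) \<and> ex 2 (Co 3 n) \<and> ex 2 (Co 4 n) \<and> ex 3 (Co 5 n)"
      using exCo[OF _ n, of 0] exCo[OF _ n, of 1] exCo[OF _ n, of 2] exCo[OF _ n, of 3]
        exCo[OF _ n, of 4] exCo[OF _ n, of 5] by (simp add: r_def)
  qed
  obtain Y where Y: "\<forall>m<6. K_cauchy d (Y m)" "\<exists>m<6. \<not> K_null d (Y m)"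
      "K_null d (\<lambda>n. \<Sum>m<6. Co m n \<cdot> qpow4 d (Y m n))"
    using core[OF cCo lev] by blast
  define x where "x i n = (if i \<in> idx ` {..<6} then PP (- q (inv_into {..<6} idx i)) \<cdot> Y (inv_into {..<6} idx i) n else 0)" for i n
  have xidx: "x (idx m) = (\<lambda>n. PP (- q m) \<cdot> Y m n)" if "m < 6" for m
    using that inj by (auto simp: x_def inv_into_f_f)
  have xo: "x i = (\<lambda>n. 0)" if "i \<notin> idx ` {..<6}" for i
    using that by (auto simp: x_def)
  have cx: "\<forall>i<11. K_cauchy d (x i)"
  proof (intro allI impI)
    fix i :: nat assume "i < 11"
    show "K_cauchy d (x i)"
    proof (cases "i \<in> idx ` {..<6}")
      case True
      then obtain m where m: "m < 6" "i = idx m" by auto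
      show ?thesis using xidx[OF m(1)] m Y(1) by (auto intro!: cauchy_mul cauchy_const)
    next
      case False thus ?thesis using xo cauchy_const by simp
    qed
  qed
  have nnx: "\<exists>i<11. \<not> K_null d (x i)"
  proof -
    obtain m where m: "m < 6" "\<not> K_null d (Y m)" using Y(2) by blast
    have "\<not> K_null d (x (idx m))"
    proof
      assume "K_null d (x (idx m))"
      hence "K_null d (\<lambda>n. PP (q m) \<cdot> (PP (- q m) \<cdot> Y m n))" using xidx[OF m(1)] null_cmul by simp
      moreover have "PP (q m) \<cdot> (PP (- q m) \<cdot> Y m n) = Y m n" for n
        by (rule emb_inj) (simp add: emb_mul emb_PP power_int_minus s_nz)
      ultimately show False using m(2) by simp
    qed
    thus ?thesis using idx11[OF m(1)] by blast
  qed
  have diag: "diag4 d 11 a x n = PP j \<cdot> (\<Sum>m<6. Co m n \<cdot> qpow4 d (Y m n))" for n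
  proof -
    have sub: "idx ` {..<6} \<subseteq> {..<11}" using idx11 by auto
    have "diag4 d 11 a x n = (\<Sum>i<11. a i n \<cdot> qpow4 d (x i n))" by (rule diag4_sum)
    also have "\<dots> = (\<Sum>i\<in>idx ` {..<6}. a i n \<cdot> qpow4 d (x i n))"
      by (rule sum.mono_neutral_right) (use sub xo in \<open>auto simp: qpow4_def zero_prod_def\<close>)
    also have "\<dots> = (\<Sum>m<6. a (idx m) n \<cdot> qpow4 d (x (idx m) n))"
      by (rule sum.reindex[OF inj, unfolded comp_def])
    also have "\<dots> = (\<Sum>m<6. PP j \<cdot> (Co m n \<cdot> qpow4 d (Y m n)))"
    proof (rule sum.cong)
      fix m assume "m \<in> {..<6::nat}"
      hence m: "m < 6" by simp
      show "a (idx m) n \<cdot> qpow4 d (x (idx m) n) = PP j \<cdot> (Co m n \<cdot> qpow4 d (Y m n))"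
        unfolding xidx[OF m] Co_def by (rule term_id[OF q4[OF m]])
    qed simp
    also have "\<dots> = PP j \<cdot> (\<Sum>m<6. Co m n \<cdot> qpow4 d (Y m n))" by (simp add: mul_sum)
    finally show ?thesis .
  qed
  have de: "diag4 d 11 a x = (\<lambda>n. PP j \<cdot> (\<Sum>m<6. Co m n \<cdot> qpow4 d (Y m n)))"
    by (rule ext) (rule diag)
  have "K_null d (diag4 d 11 a x)"
    unfolding de by (rule null_cmul[OF Y(3)])
  thus ?thesis using cx nnx by blast
qed


end
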